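(* Let $X$ be a Banach space over $\mathbb{K}$. If there exists a Banach space $Y\neq\{0\}$ over $\mathbb{K}$ such that the pair $(X,Y)$ has the uniform sBPBp, then the pair $(X,\mathbb{K})$ has the uniform sBPBp (with the same function $\eta(\varepsilon)$).
   Context: $\mathbb{K}=\mathbb{R}$ or $\mathbb{C}$. $S_X$ denotes the unit sphere of $X$ and $\mathcal{L}(X,Y)$ the space of bounded linear operators from $X$ to $Y$ with the operator norm; $\mathcal{L}(X,\mathbb{K})=X^*$. A pair of Banach spaces $(X,Y)$ has the uniform strong Bishop–Phelps–Bollobás property (uniform sBPBp) if for every $\varepsilon>0$ there exists $\eta(\varepsilon)>0$ such that whenever $T\in\mathcal{L}(X,Y)$ with $\|T\|=1$ and $x_0\in S_X$ satisfy $\|T(x_0)\|>1-\eta(\varepsilon)$, there exists $x_1\in S_X$ with $\|T(x_1)\|=1$ and $\|x_1-x_0\|<\varepsilon$. *)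

theory Defs
  imports "HOL-Analysis.Analysis"
begin

text \<open>A complex Banach space is modelled as a real Banach space (type class banach)
  together with a complex scalar multiplication compatible with the real one and
  with the norm.\<close>
definition cplx_scale :: "(complex \<Rightarrow> 'a::real_normed_vector \<Rightarrow> 'a) \<Rightarrow> bool" where
  "cplx_scale sc \<longleftrightarrow>
     (\<forall>a b x. sc (a + b) x = sc a x + sc b x) \<and>
     (\<forall>a x y. sc a (x + y) = sc a x + sc a y) \<and>
     (\<forall>a b x. sc (a * b) x = sc a (sc b x)) \<and>
     (\<forall>x. sc 1 x = x) \<and>
     (\<forall>a x. norm (sc a x) = cmod a * norm x) \<and>
     (\<forall>r x. sc (complex_of_real r) x = scaleR r x)"

text \<open>Bounded K-linear operators = bounded (real-)linear maps commuting
  with the K-scalar multiplication; their operator norm is onorm.\<close>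
definition sBPBp_with ::
  "('k \<Rightarrow> 'x::real_normed_vector \<Rightarrow> 'x) \<Rightarrow> ('k \<Rightarrow> 'y::real_normed_vector \<Rightarrow> 'y)
    \<Rightarrow> (real \<Rightarrow> real) \<Rightarrow> bool" where
  "sBPBp_with scX scY eta \<longleftrightarrow>
     (\<forall>\<epsilon>>0. eta \<epsilon> > 0 \<and>
        (\<forall>T x0. bounded_linear T \<and> (\<forall>c x. T (scX c x) = scY c (T x)) \<and>
                onorm T = 1 \<and> norm x0 = 1 \<and> norm (T x0) > 1 - eta \<epsilon> \<longrightarrow>
           (\<exists>x1. norm x1 = 1 \<and> norm (T x1) = 1 \<and> norm (x1 - x0) < \<epsilon>)))"

end

theory Submission
  imports Defs
begin

lemma onorm_eq_norm:
  assumes "\<And>x. norm (T x) = norm (f x)"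
  shows "onorm T = onorm f"
  unfolding onorm_def using assms by simp

lemma unit_vec0:
  assumes "\<exists>y::'a::real_normed_vector. y \<noteq> 0"
  shows "\<exists>y0::'a. norm y0 = 1"
proof -
  obtain y :: 'a where "y \<noteq> 0" using assms by blast
  then have "norm (y /\<^sub>R norm y) = 1" by simp
  then show ?thesis by blast
qed

lemma part1:
  assumes ex: "\<exists>y::'y::banach. y \<noteq> 0"
    and H: "sBPBp_with (scaleR :: real \<Rightarrow> 'x::banach \<Rightarrow> 'x) (scaleR :: real \<Rightarrow> 'y \<Rightarrow> 'y) eta"
  shows "sBPBp_with (scaleR :: real \<Rightarrow> 'x \<Rightarrow> 'x) (scaleR :: real \<Rightarrow> real \<Rightarrow> real) eta"
proof -
  obtain y0 :: 'y where y0: "norm y0 = 1" using unit_vec0[OF ex] by blast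
  show ?thesis unfolding sBPBp_with_def
  proof (intro allI impI conjI)
    fix e :: real assume e: "e > 0"
    show "eta e > 0" using H e unfolding sBPBp_with_def by blast
    fix f :: "'x \<Rightarrow> real" and x0
    assume A: "bounded_linear f \<and> (\<forall>c x. f (c *\<^sub>R x) = c *\<^sub>R f x) \<and> onorm f = 1 \<and>
      norm x0 = 1 \<and> norm (f x0) > 1 - eta e"
    define T where "T = (\<lambda>x. f x *\<^sub>R y0)"
    have nT: "\<And>x. norm (T x) = norm (f x)" using y0 by (simp add: T_def)
    have bl: "bounded_linear T" unfolding T_def
      using A bounded_linear_scaleR_left bounded_linear_compose by blast
    have com: "\<forall>c x. T (c *\<^sub>R x) = c *\<^sub>R T x"
      using bl by (simp add: linear_simps(5) bounded_linear.linear)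
    have "onorm T = 1" using onorm_eq_norm[of T f, OF nT] A by simp
    then obtain x1 where "norm x1 = 1 \<and> norm (T x1) = 1 \<and> norm (x1 - x0) < e"
      using H e A bl com nT unfolding sBPBp_with_def by metis
    then show "\<exists>x1. norm x1 = 1 \<and> norm (f x1) = 1 \<and> norm (x1 - x0) < e"
      using nT by metis
  qed
qed

lemma part2:
  assumes cX: "cplx_scale (scX :: complex \<Rightarrow> 'x::banach \<Rightarrow> 'x)"
    and cY: "cplx_scale (scY :: complex \<Rightarrow> 'y::banach \<Rightarrow> 'y)"
    and ex: "\<exists>y::'y. y \<noteq> 0"
    and H: "sBPBp_with scX scY eta"
  shows "sBPBp_with scX (\<lambda>c z::complex. c * z) eta"
proof -
  obtain y0 :: 'y where y0: "norm y0 = 1" using unit_vec0[OF ex] by blast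
  show ?thesis unfolding sBPBp_with_def
  proof (intro allI impI conjI)
    fix e :: real assume e: "e > 0"
    show "eta e > 0" using H e unfolding sBPBp_with_def by blast
    fix f :: "'x \<Rightarrow> complex" and x0
    assume A: "bounded_linear f \<and> (\<forall>c x. f (scX c x) = c * f x) \<and> onorm f = 1 \<and>
      norm x0 = 1 \<and> norm (f x0) > 1 - eta e"
    define T where "T = (\<lambda>x. scY (f x) y0)"
    have nT: "\<And>x. norm (T x) = norm (f x)" using y0 cY by (simp add: T_def cplx_scale_def)
    interpret f: bounded_linear f using A by blast
    have bl: "bounded_linear T"
    proof
      fix x y show "T (x + y) = T x + T y"
        using cY by (simp add: T_def f.add cplx_scale_def)
    next
      fix r x show "T (r *\<^sub>R x) = r *\<^sub>R T x"
        using cY unfolding T_def cplx_scale_def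
        by (metis f.scaleR scaleR_conv_of_real)
    next
      obtain K where K: "\<And>x. norm (f x) \<le> norm x * K" using f.bounded by blast
      show "\<exists>K. \<forall>x. norm (T x) \<le> norm x * K" using K nT by metis
    qed
    have com: "\<forall>c x. T (scX c x) = scY c (T x)"
      using cY A by (simp add: T_def cplx_scale_def)
    have "onorm T = 1" using onorm_eq_norm[of T f, OF nT] A by simp
    then obtain x1 where "norm x1 = 1 \<and> norm (T x1) = 1 \<and> norm (x1 - x0) < e"
      using H e A bl com nT unfolding sBPBp_with_def by metis
    then show "\<exists>x1. norm x1 = 1 \<and> norm (f x1) = 1 \<and> norm (x1 - x0) < e"
      using nT by metis
  qed
qed

theorem mainTheorem6:
  shows "(\<forall>eta. (\<exists>y::'y::banach. y \<noteq> 0) \<and>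
            sBPBp_with (scaleR :: real \<Rightarrow> 'x::banach \<Rightarrow> 'x) (scaleR :: real \<Rightarrow> 'y \<Rightarrow> 'y) eta
          \<longrightarrow> sBPBp_with (scaleR :: real \<Rightarrow> 'x \<Rightarrow> 'x) (scaleR :: real \<Rightarrow> real \<Rightarrow> real) eta)
       \<and> (\<forall>scX scY eta. cplx_scale (scX :: complex \<Rightarrow> 'x \<Rightarrow> 'x) \<and>
            cplx_scale (scY :: complex \<Rightarrow> 'y \<Rightarrow> 'y) \<and> (\<exists>y::'y. y \<noteq> 0) \<and>
            sBPBp_with scX scY eta
          \<longrightarrow> sBPBp_with scX (\<lambda>c z::complex. c * z) eta)"
  using part1 part2 by blast

end
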